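(* Let $\theta\in(0,\pi/2]$ be a Pythagorean angle, i.e. $\cos\theta=s/r$ and $\sin\theta=t/r$ are both rational, with $r,s\in\mathbb{Z}$, $0\le|s|<r$, $\gcd(r,s)=1$. Then: (i) $\mathcal{N}_\theta=\mathbb{N}$; (ii) for every $n\in\mathcal{N}_\theta$ there are infinitely many distinct $\theta$-parallelogram envelopes for $n$; (iii) for every $n\in\mathcal{N}_\theta$ there are infinitely many rational numbers $m\ge1$ such that $n\in\mathcal{N}_{\theta,m}$.
   Context: A $\theta$-parallelogram envelope for a natural number $n$ is a quintuple of positive rationals $(a,b,c,d,e)$ with $a^2+b^2-\frac{2s}{r}ab=c^2$, $a^2+d^2+\frac{2s}{r}ad=e^2$, and $a(b+d)=rn$; $\mathcal{N}_\theta$ is the set of natural numbers admitting one. For a positive rational $m$, $\mathcal{N}_{\theta,m}$ is the set of natural numbers $n$ admitting such an envelope with additionally $d=mb$. *)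

theory Defs
  imports Complex_Main
begin

definition par_envelope :: "int \<Rightarrow> int \<Rightarrow> nat \<Rightarrow> rat \<times> rat \<times> rat \<times> rat \<times> rat \<Rightarrow> bool" where
  "par_envelope r s n q = (case q of (a, b, c, d, e) \<Rightarrow>
     a > 0 \<and> b > 0 \<and> c > 0 \<and> d > 0 \<and> e > 0 \<and>
     a^2 + b^2 - 2 * (of_int s / of_int r) * a * b = c^2 \<and>
     a^2 + d^2 + 2 * (of_int s / of_int r) * a * d = e^2 \<and>
     a * (b + d) = of_int r * of_nat n)"

definition N_theta :: "int \<Rightarrow> int \<Rightarrow> nat set" where
  "N_theta r s = {n. \<exists>q. par_envelope r s n q}"

definition N_theta_m :: "int \<Rightarrow> int \<Rightarrow> rat \<Rightarrow> nat set" where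
  "N_theta_m r s m = {n. \<exists>a b c d e. par_envelope r s n (a, b, c, d, e) \<and> d = m * b}"

end

theory Submission
  imports Defs
begin

definition ff :: "rat \<Rightarrow> rat" where "ff x = (1 - x^2) / (2*x)"
definition GG :: "rat \<Rightarrow> rat" where "GG L = 2*L^2 - 2*L + 5"
definition HH :: "rat \<Rightarrow> rat" where "HH L = 2*(8*L^3 - 36*L^2 + 66*L - 25)"
definition mm :: "rat \<Rightarrow> rat" where "mm L = 3 / (2*(L-2))"
definition pp :: "rat \<Rightarrow> rat" where "pp L = 18*L*(L-2)^2 / (GG L)^2"
definition SS :: "rat \<Rightarrow> rat" where "SS L = (L+1)*HH L / (12*L*(L-2)*GG L)"

lemma GG_pos: "GG L > 0"
proof -
  have "GG L = (L - 1/2)^2 * 2 + 9/2" by (simp add: GG_def power2_eq_square algebra_simps)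
  moreover have "(L - 1/2)^2 * 2 \<ge> 0" by simp
  ultimately show ?thesis by linarith
qed

lemma key_id:
  assumes "L > 2"
  shows "ff (mm L) + ff (pp L) = L * (SS L)^2"
proof -
  have g: "GG L \<noteq> 0" using GG_pos[of L] by simp
  have l2: "L - 2 \<noteq> 0" using assms by simp
  have l0: "L \<noteq> 0" using assms by simp
  show ?thesis using g l2 l0
    unfolding ff_def mm_def pp_def SS_def
    apply (simp add: field_simps)
    apply (simp add: GG_def HH_def)
    apply algebra
    done
qed


lemma ff_sq: "x \<noteq> 0 \<Longrightarrow> 1 + (ff x)^2 = ((1 + x^2)/(2*x))^2"
  unfolding ff_def by (simp add: field_simps) algebra

lemma tri1:
  fixes R k F y :: rat
  assumes "R^2 = 1 + k^2" "R \<noteq> 0"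
  shows "(y*R)^2 + (y*(F+k))^2 - 2*(k/R)*(y*R)*(y*(F+k)) = y^2*(1+F^2)"
proof -
  have h1: "2*(k/R)*(y*R)*(y*(F+k)) = 2*k*y^2*(F+k)" using assms(2) by (simp add: field_simps power2_eq_square)
  have h2: "(y*R)^2 = y^2*(1+k^2)" by (simp add: power_mult_distrib assms(1))
  show ?thesis unfolding h1 h2 by algebra
qed

lemma tri2:
  fixes R k F y :: rat
  assumes "R^2 = 1 + k^2" "R \<noteq> 0"
  shows "(y*R)^2 + (y*(F-k))^2 + 2*(k/R)*(y*R)*(y*(F-k)) = y^2*(1+F^2)"
proof -
  have h1: "2*(k/R)*(y*R)*(y*(F-k)) = 2*k*y^2*(F-k)" using assms(2) by (simp add: field_simps power2_eq_square)
  have h2: "(y*R)^2 = y^2*(1+k^2)" by (simp add: power_mult_distrib assms(1))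
  show ?thesis unfolding h1 h2 by algebra
qed

lemma ffm_eq: "L > 2 \<Longrightarrow> ff (mm L) = (L-2)/3 - 3/(4*(L-2))"
  unfolding ff_def mm_def by (simp add: field_simps) algebra

lemma GG_ge: "L \<ge> 2 \<Longrightarrow> GG L \<ge> 2*L*(L-2)"
  unfolding GG_def by (simp add: algebra_simps power2_eq_square)

lemma GG_sq_ge: "L \<ge> 2 \<Longrightarrow> (GG L)^2 \<ge> 4*L^2*(L-2)^2"
proof -
  assume L: "L \<ge> 2"
  have "0 \<le> 2*L*(L-2)" using L by simp
  then have "(2*L*(L-2))^2 \<le> (GG L)^2" using GG_ge[OF L] by (simp add: power_mono)
  then show ?thesis by (simp add: power_mult_distrib)
qed

lemma GG_sq_le1: "L \<ge> 6 \<Longrightarrow> (GG L)^2 \<le> 4*L*(L-2)^2*(L+9)"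
proof -
  assume L: "L \<ge> 6"
  have e: "4*L*(L-2)^2*(L+9) - (GG L)^2 = L^2*(28*L - 152) + (164*L - 25)"
    unfolding GG_def by (simp add: algebra_simps power2_eq_square power3_eq_cube)
  have "L^2*(28*L - 152) \<ge> 0" using L by simp
  moreover have "164*L - 25 \<ge> 0" using L by simp
  ultimately show ?thesis using e by linarith
qed

lemma GG_sq_le2: "L \<ge> 24 \<Longrightarrow> (GG L)^2 \<le> 2*L*(L-2)^2*(2*L+5)"
proof -
  assume L: "L \<ge> 24"
  have e: "2*L*(L-2)^2*(2*L+5) - (GG L)^2 = L^2*(2*L - 48) + (60*L - 25)"
    unfolding GG_def by (simp add: algebra_simps power2_eq_square power3_eq_cube)
  have "L^2*(2*L - 48) \<ge> 0" using L by simp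
  moreover have "60*L - 25 \<ge> 0" using L by simp
  ultimately show ?thesis using e by linarith
qed

lemma HH_pos: "L \<ge> 5 \<Longrightarrow> HH L > 0"
proof -
  assume L: "L \<ge> 5"
  have e: "HH L = 8*L^2*(2*L - 9) + (132*L - 50)" unfolding HH_def by (simp add: algebra_simps power2_eq_square power3_eq_cube)
  have "8*L^2*(2*L - 9) \<ge> 0" using L by simp
  moreover have "132*L - 50 > 0" using L by simp
  ultimately show ?thesis using e by linarith
qed


lemma pp_facts:
  assumes L: "L \<ge> 30"
  shows "pp L > 0" "pp L \<le> 9/(2*L)" "1/(2*pp L) \<ge> L/9" "1/(2*pp L) \<le> L/9 + 1"
    "3/(2*pp L) \<le> (L-2)/3 + 3/2"
proof -
  have G: "GG L > 0" by (rule GG_pos)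
  have l2: "L - 2 > 0" using L by simp
  have inv: "1/(2*pp L) = (GG L)^2 / (36*L*(L-2)^2)"
    unfolding pp_def using G l2 L by (simp add: field_simps)
  show "pp L > 0" unfolding pp_def using G l2 L by simp
  have A: "(GG L)^2 \<ge> 4*L^2*(L-2)^2" by (rule GG_sq_ge) (use L in simp)
  have pos: "36*L*(L-2)^2 > 0" using l2 L by simp
  have nz: "(L-2)^2 \<noteq> 0" "L \<noteq> 0" using l2 L by auto
  show "1/(2*pp L) \<ge> L/9"
  proof -
    have e: "4*L^2*(L-2)^2 = (L/9) * (36*L*(L-2)^2)" by (simp add: power2_eq_square algebra_simps)
    have "L/9 = 4*L^2*(L-2)^2 / (36*L*(L-2)^2)" unfolding e using pos L by (simp add: field_simps)
    also have "\<dots> \<le> (GG L)^2 / (36*L*(L-2)^2)" by (rule divide_right_mono[OF A]) (use pos in simp)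
    finally show ?thesis using inv by simp
  qed
  show "1/(2*pp L) \<le> L/9 + 1"
  proof -
    have B: "(GG L)^2 \<le> 4*L*(L-2)^2*(L+9)" by (rule GG_sq_le1) (use L in simp)
    have "(GG L)^2 / (36*L*(L-2)^2) \<le> 4*L*(L-2)^2*(L+9) / (36*L*(L-2)^2)" using divide_right_mono[OF B, of "36*L*(L-2)^2"] pos by simp
    also have "\<dots> = ((L/9 + 1) * (36*L*(L-2)^2)) / (36*L*(L-2)^2)"
      by (simp add: power2_eq_square algebra_simps)
    also have "\<dots> = L/9 + 1" using pos L by simp
    finally show ?thesis using inv by simp
  qed
  show "3/(2*pp L) \<le> (L-2)/3 + 3/2"
  proof -
    have B: "(GG L)^2 \<le> 2*L*(L-2)^2*(2*L+5)" by (rule GG_sq_le2) (use L in simp)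
    have "3/(2*pp L) = 3*((GG L)^2 / (36*L*(L-2)^2))" unfolding inv[symmetric] by simp
    also have "\<dots> \<le> 3*(2*L*(L-2)^2*(2*L+5) / (36*L*(L-2)^2))" using divide_right_mono[OF B, of "36*L*(L-2)^2"] pos by simp
    also have "\<dots> = 3*(((2*L+5)/18 * (36*L*(L-2)^2)) / (36*L*(L-2)^2))"
    proof -
      have ne: "2*L*(L-2)^2*(2*L+5) = (2*L+5)/18 * (36*L*(L-2)^2)" by (simp add: field_simps)
      show ?thesis by (subst ne) (rule refl)
    qed
    also have "\<dots> = 3*((2*L+5)/18)" using pos L by simp
    also have "\<dots> = (L-2)/3 + 3/2" by (simp add: field_simps)
    finally show ?thesis .
  qed
  show "pp L \<le> 9/(2*L)"
  proof -
    have "pp L = 18*L*(L-2)^2 / (GG L)^2" by (simp add: pp_def)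
    also have "\<dots> \<le> 18*L*(L-2)^2 / (4*L^2*(L-2)^2)"
      using A l2 L G by (intro divide_left_mono) (auto intro!: mult_pos_pos)
    also have "\<dots> = 9/(2*L)"
    proof -
      have ne: "18*L*(L-2)^2 = (9/(2*L)) * (4*L^2*(L-2)^2)" using L by (simp add: field_simps power2_eq_square)
      have p4: "4*L^2*(L-2)^2 \<noteq> 0" using L l2 by simp
      show ?thesis by (subst ne) (use p4 in simp)
    qed
    finally show ?thesis .
  qed
qed

lemma ff_split: "x \<noteq> 0 \<Longrightarrow> ff x = 1/(2*x) - x/2"
  unfolding ff_def by (simp add: field_simps power2_eq_square)

lemma ff_bounds:
  assumes L: "L \<ge> 30"
  shows "ff (pp L) \<ge> L/9 - 1" "ff (pp L) \<le> L/9 + 1"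
    "ff (mm L) \<ge> (L-2)/3 - 1/2" "ff (mm L) \<le> (L-2)/3"
    "3 * ff (pp L) - ff (mm L) > 0" "3 * ff (pp L) - ff (mm L) \<le> 2"
proof -
  note P = pp_facts[OF L]
  have pn: "pp L \<noteq> 0" using P(1) by simp
  have sp: "ff (pp L) = 1/(2*pp L) - pp L/2" by (rule ff_split[OF pn])
  have small: "pp L / 2 \<le> 1/8"
  proof -
    have "9/(2*L) \<le> 1/4" using L by (simp add: field_simps)
    then show ?thesis using P(2) by simp
  qed
  show "ff (pp L) \<ge> L/9 - 1" using sp P(3) small by linarith
  show "ff (pp L) \<le> L/9 + 1" using sp P(4) P(1) by linarith
  have fm: "ff (mm L) = (L-2)/3 - 3/(4*(L-2))" by (rule ffm_eq) (use L in simp)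
  have q: "3/(4*(L-2)) \<le> 1/2" "3/(4*(L-2)) \<ge> 0" using L by (simp_all add: field_simps)
  have l3: "(L-2)/3 = L/3 - 2/3" by simp
  show "ff (mm L) \<ge> (L-2)/3 - 1/2" using fm q by linarith
  show "ff (mm L) \<le> (L-2)/3" using fm q by linarith
  define Y where "Y = 1/(2*pp L)"
  define V where "V = pp L / 2"
  define W where "W = 3/(4*(L-2))"
  have e1: "3 * ff (pp L) = 3*Y - 3*V" using sp unfolding Y_def V_def by (simp add: algebra_simps)
  have e2: "3/(2*pp L) = 3*Y" unfolding Y_def by simp
  have y1: "L/9 \<le> Y" using P(3) unfolding Y_def .
  have y2: "3*Y \<le> (L-2)/3 + 3/2" using P(5) e2 by simp
  have v1: "0 < V" "V \<le> 1/8" using P(1) small unfolding V_def by auto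
  have fm': "ff (mm L) = (L-2)/3 - W" using fm unfolding W_def .
  have l3: "(L-2)/3 = L/3 - 2/3" by simp
  have w1: "W \<le> 1/2" "0 \<le> W" using q unfolding W_def by auto
  have "3 * ff (pp L) - ff (mm L) > 0 \<and> 3 * ff (pp L) - ff (mm L) \<le> 2"
    unfolding e1 fm' using y1 y2 v1 w1 l3 by (intro conjI; linarith)
  then show "3 * ff (pp L) - ff (mm L) > 0" "3 * ff (pp L) - ff (mm L) \<le> 2" by auto
qed


lemma SS_pos: "L \<ge> 30 \<Longrightarrow> SS L > 0"
  unfolding SS_def using HH_pos[of L] GG_pos[of L] by (simp add: zero_less_mult_iff)

lemma ratio_bounds:
  fixes Fp Fm k L :: rat
  assumes "k \<ge> 0" "Fp \<ge> L/9 - 1" "3*Fp - Fm > 0" "3*Fp - Fm \<le> 2" "L \<ge> 30"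
  shows "(Fm - k)/(Fp + k) < 3" "3 - (Fm - k)/(Fp + k) \<le> 18*(2 + 4*k)/L"
proof -
  have p: "Fp + k > 0" using assms by linarith
  have e: "3 - (Fm - k)/(Fp + k) = (3*Fp - Fm + 4*k)/(Fp + k)" using p by (simp add: field_simps)
  show "(Fm - k)/(Fp + k) < 3"
  proof -
    have "(3*Fp - Fm + 4*k)/(Fp + k) > 0" using p assms by (intro divide_pos_pos) linarith+
    then show ?thesis using e by linarith
  qed
  have "(3*Fp - Fm + 4*k)/(Fp + k) \<le> (2 + 4*k)/(Fp + k)"
    using p assms by (intro divide_right_mono) linarith+
  also have "\<dots> \<le> (2 + 4*k)/(L/18)"
  proof (rule divide_left_mono)
    show "0 \<le> 2 + 4*k" using assms by linarith
    have "L/18 \<le> L/9 - 1" using assms by linarith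
    then show "L/18 \<le> Fp + k" using assms by linarith
    show "0 < (Fp + k) * (L/18)" using p assms by simp
  qed
  also have "\<dots> = 18*(2 + 4*k)/L" by (simp add: field_simps)
  finally show "3 - (Fm - k)/(Fp + k) \<le> 18*(2 + 4*k)/L" using e by simp
qed

lemma env:
  fixes r s :: int and t L :: rat and n j :: nat
  assumes t: "t > 0" "t^2 = of_int r^2 - of_int s^2" and r: "r > 0" and s: "s \<ge> 0"
    and j: "j > 0" and L: "L = t * of_nat n * (of_nat j)^2" "L \<ge> 30" "L \<ge> 9 * (of_int s / t) + 12"
  shows "\<exists>a b c d e. par_envelope r s n (a,b,c,d,e) \<and> b > 0 \<and> d/b \<ge> 1 \<and> d/b < 3
           \<and> 3 - d/b \<le> 18*(2 + 4*(of_int s/t))/L"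
proof -
  define k where "k = of_int s / t"
  define R where "R = of_int r / t"
  have k0: "k \<ge> 0" unfolding k_def using s t by simp
  have R0: "R > 0" unfolding R_def using r t by simp
  have hR: "R^2 = 1 + k^2"
  proof -
    have "R^2 = (of_int r)^2 / t^2" unfolding R_def by (simp add: power_divide)
    also have "\<dots> = (t^2 + (of_int s)^2)/t^2" using t(2) by simp
    also have "\<dots> = 1 + k^2" unfolding k_def using t(1) by (simp add: power_divide add_divide_distrib)
    finally show ?thesis .
  qed
  have sr: "of_int s / of_int r = k / R" unfolding k_def R_def using t r by (simp add: field_simps)
  define S where "S = SS L"
  have S0: "S > 0" unfolding S_def using SS_pos L(2) by simp
  define y where "y = 1 / (of_nat j * S)"
  have y0: "y > 0" unfolding y_def using S0 j by simp
  define p where "p = pp L"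
  define m where "m = mm L"
  define Fp where "Fp = ff p"
  define Fm where "Fm = ff m"
  note B = ff_bounds[OF L(2), folded p_def m_def, folded Fp_def Fm_def]
  have p0: "p > 0" unfolding p_def using pp_facts(1)[OF L(2)] .
  have m0: "m > 0" unfolding m_def mm_def using L(2) by simp
  have key: "Fm + Fp = L * S^2" unfolding Fm_def Fp_def m_def p_def S_def
    using key_id[of L] L(2) by simp
  define a where "a = y*R"
  define b where "b = y*(Fp + k)"
  define d where "d = y*(Fm - k)"
  define c where "c = y*((1 + p^2)/(2*p))"
  define e where "e = y*((1 + m^2)/(2*m))"
  have Fpk: "Fp + k > 0" using B(1) L(2) k0 by linarith
  have l3: "(L-2)/3 = L/3 - 2/3" by simp
  have Fmk: "Fm - k \<ge> Fp + k" using l3 B(2) B(3) L(3) unfolding k_def[symmetric] by linarith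
  have b0: "b > 0" unfolding b_def using y0 Fpk by simp
  have d0: "d > 0" unfolding d_def using y0 Fpk Fmk by simp
  have a0: "a > 0" unfolding a_def using y0 R0 by simp
  have c0: "c > 0" unfolding c_def using y0 p0 by (simp add: add_pos_nonneg)
  have e0: "e > 0" unfolding e_def using y0 m0 by (simp add: add_pos_nonneg)
  have eq1: "a^2 + b^2 - 2 * (of_int s / of_int r) * a * b = c^2"
  proof -
    have "a^2 + b^2 - 2 * (of_int s / of_int r) * a * b = y^2*(1+Fp^2)"
      unfolding sr a_def b_def using tri1[OF hR] R0 by simp
    also have "\<dots> = c^2" unfolding c_def Fp_def using ff_sq[of p] p0 by (simp add: power_mult_distrib times_divide_eq_right[symmetric] del: times_divide_eq_right)
    finally show ?thesis .
  qed
  have eq2: "a^2 + d^2 + 2 * (of_int s / of_int r) * a * d = e^2"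
  proof -
    have "a^2 + d^2 + 2 * (of_int s / of_int r) * a * d = y^2*(1+Fm^2)"
      unfolding sr a_def d_def using tri2[OF hR] R0 by simp
    also have "\<dots> = e^2" unfolding e_def Fm_def using ff_sq[of m] m0 by (simp add: power_mult_distrib times_divide_eq_right[symmetric] del: times_divide_eq_right)
    finally show ?thesis .
  qed
  have eq3: "a * (b + d) = of_int r * of_nat n"
  proof -
    have "a * (b + d) = R * y^2 * (Fm + Fp)" unfolding a_def b_def d_def by (simp add: algebra_simps power2_eq_square)
    also have "\<dots> = R * L * (y * S)^2" unfolding key by (simp add: algebra_simps power2_eq_square)
    also have "y * S = 1 / of_nat j" unfolding y_def using S0 by simp
    also have "R * L * (1 / of_nat j)^2 = of_int r * of_nat n"
      unfolding R_def L(1) using t(1) j by (simp add: field_simps power2_eq_square)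
    finally show ?thesis .
  qed
  have env: "par_envelope r s n (a,b,c,d,e)"
    unfolding par_envelope_def using a0 b0 c0 d0 e0 eq1 eq2 eq3 by simp
  have db: "d/b = (Fm - k)/(Fp + k)" unfolding d_def b_def using y0 by simp
  have "d/b \<ge> 1" unfolding db using Fpk Fmk by simp
  moreover have "d/b < 3" "3 - d/b \<le> 18*(2 + 4*k)/L"
    unfolding db using ratio_bounds[OF k0 B(1) B(5) B(6) L(2)] by auto
  ultimately show ?thesis using env b0 unfolding k_def by blast
qed


lemma inf_lemma:
  fixes X :: "rat set" and K :: rat and J0 :: nat
  assumes J0: "J0 \<ge> 1" and H: "\<And>j. j \<ge> J0 \<Longrightarrow> \<exists>\<rho>\<in>X. \<rho> < 3 \<and> 3 - \<rho> \<le> K / of_nat j"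
  shows "infinite X"
proof
  assume fin: "finite X"
  define X' where "X' = {x\<in>X. x < 3}"
  have finX': "finite X'" unfolding X'_def using fin by simp
  obtain \<rho>0 where "\<rho>0 \<in> X" "\<rho>0 < 3" using H[of J0] by auto
  then have ne: "X' \<noteq> {}" unfolding X'_def by auto
  define \<delta> where "\<delta> = Min ((\<lambda>x. 3 - x) ` X')"
  have \<delta>pos: "\<delta> > 0" unfolding \<delta>_def using finX' ne by (subst Min_gr_iff) (auto simp: X'_def)
  have \<delta>le: "\<And>x. x \<in> X' \<Longrightarrow> \<delta> \<le> 3 - x" unfolding \<delta>_def using finX' by (intro Min_le) auto
  obtain N :: nat where N: "K / \<delta> \<le> of_nat N" using real_arch_simple by blast
  define j where "j = max J0 (N + 1)"
  have jJ: "j \<ge> J0" unfolding j_def by simp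
  have jpos: "(0::rat) < of_nat j" unfolding j_def using J0 by simp
  have "K / \<delta> < of_nat j" using N unfolding j_def by (simp add: of_nat_max)
  then have Kj: "K / of_nat j < \<delta>" using \<delta>pos jpos by (simp add: field_simps)
  obtain \<rho> where "\<rho> \<in> X" "\<rho> < 3" "3 - \<rho> \<le> K / of_nat j" using H[OF jJ] by auto
  then have "\<rho> \<in> X'" "3 - \<rho> < \<delta>" unfolding X'_def using Kj by auto
  then show False using \<delta>le by fastforce
qed


lemma env_family:
  fixes r s :: int and t :: rat and n :: nat
  assumes t: "t \<ge> 1" "t^2 = of_int r^2 - of_int s^2" and r: "r > 0" and s: "s \<ge> 0" and n: "n \<ge> 1"
  shows "\<exists>J0\<ge>1. \<forall>j\<ge>J0. \<exists>a b c d e. par_envelope r s n (a,b,c,d,e) \<and> b > 0 \<and> d/b \<ge> 1 \<and> d/b < 3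
           \<and> 3 - d/b \<le> 18*(2 + 4*(of_int s/t)) / of_nat j"
proof -
  define k where "k = (of_int s / t :: rat)"
  have k0: "k \<ge> 0" unfolding k_def using s t by simp
  obtain N :: nat where N: "9*k + 42 \<le> of_nat N" using real_arch_simple by blast
  show ?thesis
  proof (intro exI[of _ "N+1"] conjI allI impI)
    fix j :: nat assume jN: "N + 1 \<le> j"
    define L where "L = t * of_nat n * (of_nat j)^2"
    have j1: "(1::rat) \<le> of_nat j" using jN by simp
    have tn: "1 \<le> t * of_nat n" using t(1) n by (metis mult_mono of_nat_1 of_nat_mono mult_1_right zero_le_one order.trans)
    have jj: "of_nat j \<le> (of_nat j :: rat)^2" using j1 by (simp add: power2_eq_square)
    have "of_nat j \<le> (t * of_nat n) * (of_nat j)^2"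
      using jj tn j1 by (metis dual_order.trans mult_le_cancel_right1 zero_le_power2 mult.commute linorder_not_le not_one_le_zero order.strict_trans2)
    then have Lj: "of_nat j \<le> L" unfolding L_def by simp
    have jge: "9*k + 43 \<le> of_nat j" using N jN by (simp add: add.commute)
    have L30: "L \<ge> 30" using Lj jge k0 by linarith
    have L9: "L \<ge> 9 * (of_int s / t) + 12" using Lj jge unfolding k_def by linarith
    have tpos: "t > 0" using t(1) by simp
    have jpos: "j > 0" using jN by simp
    obtain a b c d e where E: "par_envelope r s n (a,b,c,d,e)" "b > 0" "d/b \<ge> 1" "d/b < 3"
        "3 - d/b \<le> 18*(2 + 4*(of_int s/t))/L"
      using env[OF tpos t(2) r s jpos L_def L30 L9] by blast
    have "18*(2 + 4*(of_int s/t))/L \<le> 18*(2 + 4*(of_int s/t)) / of_nat j"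
      using Lj j1 k0 unfolding k_def by (intro divide_left_mono) auto
    then show "\<exists>a b c d e. par_envelope r s n (a,b,c,d,e) \<and> b > 0 \<and> d/b \<ge> 1 \<and> d/b < 3
           \<and> 3 - d/b \<le> 18*(2 + 4*(of_int s/t)) / of_nat j" using E by fastforce
  qed simp
qed


theorem theorem6p4:
  fixes \<theta> :: real and r s :: int
  assumes "0 < \<theta>" "\<theta> \<le> pi / 2"
    and "0 \<le> \<bar>s\<bar>" "\<bar>s\<bar> < r" "gcd r s = 1"
    and "cos \<theta> = of_int s / of_int r"
    and "sin \<theta> \<in> \<rat>"
  shows "N_theta r s = {n. n \<ge> 1}
    \<and> (\<forall>n \<in> N_theta r s. infinite {q. par_envelope r s n q})
    \<and> (\<forall>n \<in> N_theta r s. infinite {m :: rat. m \<ge> 1 \<and> n \<in> N_theta_m r s m})"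
proof -
  have r: "r > 0" using assms(4) by simp
  obtain \<sigma> :: rat where sig: "sin \<theta> = of_rat \<sigma>" using assms(7) by (auto elim: Rats_cases)
  have sinpos: "sin \<theta> > 0" using assms(1,2) pi_gt_zero by (intro sin_gt_zero) linarith+
  have cosnn: "cos \<theta> \<ge> 0" using assms(1,2) by (intro cos_ge_zero) linarith+
  have s: "s \<ge> 0"
  proof -
    have "real_of_int s / real_of_int r \<ge> 0" using cosnn assms(6) by simp
    then show ?thesis using r by (simp add: zero_le_divide_iff)
  qed
  define t where "t = of_int r * \<sigma>"
  have \<sigma>pos: "\<sigma> > 0" using sinpos sig by simp
  have tpos: "t > 0" unfolding t_def using r \<sigma>pos by simp
  have t2: "t^2 = of_int r^2 - of_int s^2"
  proof -
    have one: "(sin \<theta>)^2 + (cos \<theta>)^2 = 1" by simp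
    have "real_of_rat (t^2) = (real_of_int r)^2 * (sin \<theta>)^2"
      unfolding t_def sig by (simp add: of_rat_mult power_mult_distrib of_rat_power)
    also have "\<dots> = (real_of_int r)^2 * (1 - (cos \<theta>)^2)" using one by (metis add_diff_cancel_right')
    also have "\<dots> = (real_of_int r)^2 - (real_of_int s)^2"
      unfolding assms(6) using r by (simp add: field_simps power2_eq_square)
    also have "\<dots> = real_of_rat (of_int r^2 - of_int s^2)" by (simp add: of_rat_diff of_rat_power)
    finally show ?thesis by simp
  qed
  have t1: "t \<ge> 1"
  proof -
    have "r - \<bar>s\<bar> \<ge> 1" using assms(4) by simp
    moreover have "r + \<bar>s\<bar> \<ge> 1" using assms(4) by simp
    ultimately have "(r - \<bar>s\<bar>) * (r + \<bar>s\<bar>) \<ge> 1" by (metis mult_mono mult_1_right zero_le_one order.trans)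
    then have "r^2 - s^2 \<ge> 1" by (simp add: algebra_simps power2_eq_square)
    then have "t^2 \<ge> 1" unfolding t2 by (metis of_int_1 of_int_diff of_int_le_iff of_int_power)
    then have t21: "t^2 \<ge> 1" .
    show ?thesis
    proof (rule ccontr)
      assume "\<not> t \<ge> 1"
      then have "t < 1" by simp
      then have "t*t < 1*1" using tpos by (intro mult_strict_mono) auto
      then show False using t21 by (simp add: power2_eq_square)
    qed
  qed
  note fam = env_family[OF t1 t2 r s]
  have P1: "N_theta r s = {n. n \<ge> 1}"
  proof
    show "N_theta r s \<subseteq> {n. n \<ge> 1}"
    proof
      fix n assume "n \<in> N_theta r s"
      then obtain a b c d e where E: "par_envelope r s n (a,b,c,d,e)" unfolding N_theta_def by auto
      then have "a > 0" "b > 0" "d > 0" "a * (b + d) = of_int r * of_nat n" unfolding par_envelope_def by auto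
      then have "of_int r * of_nat n > (0::rat)" by (metis add_pos_pos mult_pos_pos)
      then have "n \<noteq> 0" by (metis mult_zero_right of_nat_0 less_irrefl)
      then show "n \<in> {n. n \<ge> 1}" by simp
    qed
    show "{n. n \<ge> 1} \<subseteq> N_theta r s"
    proof
      fix n :: nat assume "n \<in> {n. n \<ge> 1}"
      then have n1: "n \<ge> 1" by simp
      obtain J0 where "J0 \<ge> 1" and H: "\<forall>j\<ge>J0. \<exists>a b c d e. par_envelope r s n (a,b,c,d,e) \<and> b > 0 \<and> d/b \<ge> 1 \<and> d/b < 3
           \<and> 3 - d/b \<le> 18*(2 + 4*(of_int s/t)) / of_nat j" using fam[OF n1] by blast
      then show "n \<in> N_theta r s" unfolding N_theta_def by blast
    qed
  qed
  have P2: "\<forall>n \<in> N_theta r s. infinite {q. par_envelope r s n q}"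
  proof
    fix n assume "n \<in> N_theta r s"
    then have n1: "n \<ge> 1" using P1 by auto
    obtain J0 where J0: "J0 \<ge> 1" and H: "\<And>j. j\<ge>J0 \<Longrightarrow> \<exists>a b c d e. par_envelope r s n (a,b,c,d,e) \<and> b > 0 \<and> d/b \<ge> 1 \<and> d/b < 3
           \<and> 3 - d/b \<le> 18*(2 + 4*(of_int s/t)) / of_nat j" using fam[OF n1] by blast
    define g where "g = (\<lambda>q::rat\<times>rat\<times>rat\<times>rat\<times>rat. case q of (a,b,c,d,e) \<Rightarrow> d/b)"
    have "infinite (g ` {q. par_envelope r s n q})"
    proof (rule inf_lemma[OF J0])
      fix j assume "j \<ge> J0"
      then obtain a b c d e where "par_envelope r s n (a,b,c,d,e)" "d/b < 3"
           "3 - d/b \<le> 18*(2 + 4*(of_int s/t)) / of_nat j" using H by blast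
      then show "\<exists>\<rho>\<in>g ` {q. par_envelope r s n q}. \<rho> < 3 \<and> 3 - \<rho> \<le> 18*(2 + 4*(of_int s/t)) / of_nat j"
        unfolding g_def by (intro bexI[of _ "d/b"]) (auto intro!: image_eqI[of _ _ "(a,b,c,d,e)"])
    qed
    then show "infinite {q. par_envelope r s n q}" by (metis finite_imageI)
  qed
  have P3: "\<forall>n \<in> N_theta r s. infinite {m :: rat. m \<ge> 1 \<and> n \<in> N_theta_m r s m}"
  proof
    fix n assume "n \<in> N_theta r s"
    then have n1: "n \<ge> 1" using P1 by auto
    obtain J0 where J0: "J0 \<ge> 1" and H: "\<And>j. j\<ge>J0 \<Longrightarrow> \<exists>a b c d e. par_envelope r s n (a,b,c,d,e) \<and> b > 0 \<and> d/b \<ge> 1 \<and> d/b < 3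
           \<and> 3 - d/b \<le> 18*(2 + 4*(of_int s/t)) / of_nat j" using fam[OF n1] by blast
    show "infinite {m :: rat. m \<ge> 1 \<and> n \<in> N_theta_m r s m}"
    proof (rule inf_lemma[OF J0])
      fix j assume "j \<ge> J0"
      then obtain a b c d e where E: "par_envelope r s n (a,b,c,d,e)" "b > 0" "d/b \<ge> 1" "d/b < 3"
           "3 - d/b \<le> 18*(2 + 4*(of_int s/t)) / of_nat j" using H by blast
      have "d = (d/b) * b" using E(2) by simp
      then have "n \<in> N_theta_m r s (d/b)" unfolding N_theta_m_def using E(1) by blast
      then show "\<exists>\<rho>\<in>{m :: rat. m \<ge> 1 \<and> n \<in> N_theta_m r s m}. \<rho> < 3 \<and> 3 - \<rho> \<le> 18*(2 + 4*(of_int s/t)) / of_nat j"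
        using E by (intro bexI[of _ "d/b"]) auto
    qed
  qed
  show ?thesis using P1 P2 P3 by blast
qed


end
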